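(* Let $N\ge 3$ be odd, let $K=\tilde F(N)$, and let $\mathcal{A}$ be a $K\times N$ circular Florentine rectangle over $\mathbb{Z}_N$ with rows $\pi_0,\dots,\pi_{K-1}$. Let $L=N(N+1)$ and for $0\le m<K$ define the length-$L$ sequence $C^m=(c^m_0,\dots,c^m_{L-1})$ by $c^m_i=\omega_{N+1}^{\pi_m(\langle i\rangle_N)\cdot i}$, $0\le i<L$. Then: (1) $\theta_a=\theta_c=\theta_{\max}=N+1$, where $\theta_a=\max\{|\theta_{C^m}(\tau)|:0\le m<K,\ 0<\tau<L\}$, $\theta_c=\max\{|\theta_{C^m,C^{m'}}(\tau)|:0\le m\neq m'<K,\ 0\le\tau<L\}$ and $\theta_{\max}=\max\{\theta_a,\theta_c\}$; (2) with $\Omega=\{1+a(N+1):a\in\mathbb{Z}_N\}$, for every $m$ the frequency-domain dual $\widehat{C}^m=(\hat c^m_0,\dots,\hat c^m_{L-1})$ satisfies $\hat c^m_j=0$ for $j\in\Omega$ and $|\hat c^m_j|=\sqrt{(N+1)/N}$ for $j\notin\Omega$ (so each $C^m$ is a spectrally constrained sequence with forbidden carrier set $\Omega$).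
   Context: $\omega_n=e^{2\pi\sqrt{-1}/n}$; $\langle i\rangle_N$ is $i$ reduced mod $N$. An $M\times N$ circular Florentine rectangle (CFR) over $\mathbb{Z}_N$ is an $M\times N$ array whose rows $\pi_i:\mathbb{Z}_N\to\mathbb{Z}_N$ are permutations of $\mathbb{Z}_N$ such that for every $m\in\mathbb{Z}_N\setminus\{0\}$ and all $i,j$, $x,y\in\mathbb{Z}_N$: $(\pi_i(x),\pi_i(x+m))=(\pi_j(y),\pi_j(y+m))$ (indices mod $N$) iff $i=j$ and $x=y$. $\tilde F(N)$ denotes the largest $M$ for which an $M\times N$ CFR exists (for odd $N\ge3$, $\tilde F(N)\ge 2$). Frequency-domain dual: $\hat c_k=\frac{1}{\sqrt L}\sum_{t=0}^{L-1}c_t\omega_L^{-tk}$. Periodic correlation: $\theta_{C,D}(\tau)=\sum_{t=0}^{L-1}c_td^*_{\langle t+\tau\rangle_L}$, $\theta_C=\theta_{C,C}$. *)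

theory Defs
  imports "HOL-Analysis.Analysis"
begin

definition omega :: "nat \<Rightarrow> complex" where
  "omega n = exp (2 * of_real pi * \<i> / of_nat n)"

definition is_CFR :: "nat \<Rightarrow> nat \<Rightarrow> (nat \<Rightarrow> nat \<Rightarrow> nat) \<Rightarrow> bool" where
  "is_CFR N M \<pi> \<longleftrightarrow>
     (\<forall>i<M. bij_betw (\<pi> i) {..<N} {..<N}) \<and>
     (\<forall>m\<in>{1..<N}. \<forall>i<M. \<forall>j<M. \<forall>x<N. \<forall>y<N.
        ((\<pi> i x, \<pi> i ((x + m) mod N)) = (\<pi> j y, \<pi> j ((y + m) mod N)))
          \<longleftrightarrow> (i = j \<and> x = y))"

definition F_tilde :: "nat \<Rightarrow> nat" where
  "F_tilde N = (GREATEST M. \<exists>\<pi>. is_CFR N M \<pi>)"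

definition pcorr :: "nat \<Rightarrow> (nat \<Rightarrow> complex) \<Rightarrow> (nat \<Rightarrow> complex) \<Rightarrow> nat \<Rightarrow> complex" where
  "pcorr L c d \<tau> = (\<Sum>t<L. c t * cnj (d ((t + \<tau>) mod L)))"

definition dft :: "nat \<Rightarrow> (nat \<Rightarrow> complex) \<Rightarrow> nat \<Rightarrow> complex" where
  "dft L c k = (1 / of_real (sqrt (real L))) * (\<Sum>t<L. c t * inverse (omega L) ^ (t * k))"

definition cfr_seq :: "nat \<Rightarrow> (nat \<Rightarrow> nat \<Rightarrow> nat) \<Rightarrow> nat \<Rightarrow> nat \<Rightarrow> complex" where
  "cfr_seq N \<pi> m i = omega (N + 1) ^ (\<pi> m (i mod N) * i)"

end

theory Submission
  imports Defs
begin



definition ee :: "nat \<Rightarrow> int \<Rightarrow> complex" where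
  "ee n x = exp (2 * of_real pi * \<i> * of_int x / of_nat n)"

lemma ee_add: "ee n (x + y) = ee n x * ee n y"
  unfolding ee_def by (simp add: exp_add[symmetric] distrib_left add_divide_distrib algebra_simps)

lemma ee_pow: "ee n x ^ k = ee n (x * int k)"
proof -
  have "ee n x ^ k = exp (of_nat k * (2 * of_real pi * \<i> * of_int x / of_nat n))"
    unfolding ee_def by (rule exp_of_nat_mult[symmetric])
  also have "of_nat k * (2 * of_real pi * \<i> * of_int x / of_nat n) = 2 * of_real pi * \<i> * of_int (x * int k) / (of_nat n :: complex)"
    by (simp add: times_divide_eq_right ac_simps)
  finally show ?thesis unfolding ee_def .
qed

lemma ee_eq_1_iff: assumes "n > 0" shows "ee n x = 1 \<longleftrightarrow> int n dvd x"
proof -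
  have "ee n x = 1 \<longleftrightarrow> (\<exists>k::int. 2 * pi * real_of_int x / real n = 2 * real_of_int k * pi)"
    unfolding ee_def exp_eq_1 by simp
  also have "\<dots> \<longleftrightarrow> (\<exists>k::int. real_of_int x = real_of_int k * real n)"
    using assms pi_gt_zero by (simp add: field_simps)
  also have "\<dots> \<longleftrightarrow> (\<exists>k::int. x = k * int n)"
    by (metis of_int_eq_iff of_int_mult of_int_of_nat_eq)
  also have "\<dots> \<longleftrightarrow> int n dvd x" by (auto simp: dvd_def mult.commute)
  finally show ?thesis .
qed

lemma ee_mult_n: "n > 0 \<Longrightarrow> ee n (int n * k) = 1"
  by (simp add: ee_eq_1_iff)

lemma ee_cong: assumes "n > 0" "int n dvd (x - y)" shows "ee n x = ee n y"
proof -
  obtain k where "x = y + int n * k" using assms(2) by (auto simp: dvd_def algebra_simps)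
  then show ?thesis using ee_mult_n[OF assms(1)] by (simp add: ee_add)
qed

lemma cnj_ee: "cnj (ee n x) = ee n (- x)"
  unfolding ee_def exp_cnj by simp

lemma norm_ee: "cmod (ee n x) = 1"
  unfolding ee_def norm_exp_eq_Re by simp

lemma ee_scale: assumes "c > 0" shows "ee (c * n) (int c * x) = ee n x"
proof (cases "n = 0")
  case False
  then show ?thesis using assms unfolding ee_def by (simp add: field_simps)
qed (simp add: ee_def)

lemma omega_pow: "omega n ^ k = ee n (int k)"
proof -
  have "omega n = ee n 1" by (simp add: omega_def ee_def)
  then show ?thesis by (simp add: ee_pow)
qed

lemma inv_omega_pow: "inverse (omega n) ^ k = ee n (- int k)"
proof -
  have "inverse (omega n) = ee n (-1)" by (simp add: omega_def ee_def exp_minus)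
  then show ?thesis by (simp add: ee_pow)
qed

lemma geo_sum: assumes "n > 0"
  shows "(\<Sum>q<n. ee n (x * int q)) = (if int n dvd x then of_nat n else 0)"
proof (cases "int n dvd x")
  case True
  then have "ee n (x * int q) = 1" for q using assms by (simp add: ee_eq_1_iff)
  then show ?thesis using True by simp
next
  case False
  have "(\<Sum>q<n. ee n (x * int q)) = (\<Sum>q<n. ee n x ^ q)" by (simp add: ee_pow)
  also have "\<dots> = 0"
  proof -
    have "ee n x \<noteq> 1" using False assms by (simp add: ee_eq_1_iff)
    moreover have "ee n x ^ n = 1" using assms by (simp add: ee_pow ee_eq_1_iff)
    ultimately show ?thesis by (simp add: sum_gp_strict)
  qed
  finally show ?thesis using False by simp
qed


lemma sum_decomp: fixes f :: "nat \<Rightarrow> 'a::comm_monoid_add"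
  shows "(\<Sum>t<N*M. f t) = (\<Sum>q<M. \<Sum>a<N. f (a + N*q))"
proof -
  have "(\<Sum>t<N*M. f t) = (\<Sum>q<M. sum f {q*N..<q*N+N})"
    using sum.nat_group[of f N M] by (simp only: mult.commute[of M N])
  also have "\<dots> = (\<Sum>q<M. \<Sum>a<N. f (a + N*q))"
  proof (rule sum.cong[OF refl])
    fix q
    have "sum f {0+q*N..<N+q*N} = (\<Sum>a = 0..<N. f (a + q*N))"
      by (rule sum.shift_bounds_nat_ivl)
    then show "sum f {q*N..<q*N+N} = (\<Sum>a<N. f (a + N*q))"
      by (simp add: atLeast0LessThan add.commute mult.commute)
  qed
  finally show ?thesis .
qed

lemma small_dvd_int: "\<bar>x::int\<bar> < d \<Longrightarrow> d dvd x \<Longrightarrow> x = 0"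
proof (rule ccontr)
  assume "\<bar>x\<bar> < d" "d dvd x" "x \<noteq> 0"
  then have "\<bar>d\<bar> \<le> \<bar>x\<bar>" using dvd_imp_le_int by blast
  then show False using \<open>\<bar>x\<bar> < d\<close> by linarith
qed

lemma corr_formula:
  fixes p s :: "nat \<Rightarrow> nat" and N \<tau> :: nat
  assumes N: "N > 0" and p: "\<forall>a<N. p a < N" and s: "\<forall>a<N. s a < N"
  shows "(\<Sum>t<N*(N+1). omega (N+1) ^ (p (t mod N) * t) *
            cnj (omega (N+1) ^ (s (((t+\<tau>) mod (N*(N+1))) mod N) * ((t+\<tau>) mod (N*(N+1))))))
       = of_nat (N+1) * (\<Sum>a<N. if p a = s ((a+\<tau>) mod N)
                            then ee (N+1) (- (int (s ((a+\<tau>) mod N)) * int \<tau>)) else 0)"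
    (is "(\<Sum>t<_. ?f t) = _")
proof -
  define L where "L = N*(N+1)"
  define g where "g a = ee (N+1) ((int (p a) - int (s ((a+\<tau>) mod N))) * int a
                          - int (s ((a+\<tau>) mod N)) * int \<tau>)" for a
  define h where "h a = - (int (p a) - int (s ((a+\<tau>) mod N)))" for a
  have termq: "?f (a + N*q) = g a * ee (N+1) (h a * int q)" if a: "a < N" for a q
  proof -
    define t where "t = a + N*q"
    define a' where "a' = (a+\<tau>) mod N"
    define u where "u = (t+\<tau>) mod L"
    define k where "k = (t+\<tau>) div L"
    have tmod: "t mod N = a" using a by (simp add: t_def)
    have umod: "u mod N = a'"
    proof -
      have "u mod N = (t+\<tau>) mod N" unfolding u_def L_def
        by (rule mod_mod_cancel) simp
      also have "t + \<tau> = (a + \<tau>) + N*q" unfolding t_def by simp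
      also have "((a + \<tau>) + N*q) mod N = a'" unfolding a'_def by simp
      finally show ?thesis .
    qed
    have ueq: "int u = int t + int \<tau> - int L * int k"
    proof -
      have "t + \<tau> = L * k + u" unfolding u_def k_def by simp
      then have "int t + int \<tau> = int L * int k + int u" by (metis of_nat_add of_nat_mult)
      then show ?thesis by simp
    qed
    have "?f t = ee (N+1) (int (p a * t)) * ee (N+1) (- int (s a' * u))"
      using tmod umod by (simp add: omega_pow cnj_ee L_def u_def a'_def)
    also have "\<dots> = ee (N+1) (int (p a) * int t - int (s a') * int u)"
      by (simp add: ee_add[symmetric])
    also have "\<dots> = ee (N+1) ((int (p a) - int (s a')) * int a - int (s a') * int \<tau>
                        + h a * int q)"
    proof (rule ee_cong)
      show "int (N+1) dvd int (p a) * int t - int (s a') * int u -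
        ((int (p a) - int (s a')) * int a - int (s a') * int \<tau> + h a * int q)"
        unfolding dvd_def
        apply (rule exI[where x = "int (p a) * int q - int (s a') * int q + int (s a') * int N * int k"])
        apply (simp only: ueq h_def a'_def t_def L_def of_nat_add of_nat_mult of_nat_1)
        apply algebra
        done
    qed simp
    also have "\<dots> = g a * ee (N+1) (h a * int q)"
      by (simp add: ee_add g_def a'_def)
    finally show ?thesis by (simp add: t_def)
  qed
  have "(\<Sum>t<N*(N+1). ?f t) = (\<Sum>q<N+1. \<Sum>a<N. ?f (a + N*q))"
    by (rule sum_decomp)
  also have "\<dots> = (\<Sum>q<N+1. \<Sum>a<N. g a * ee (N+1) (h a * int q))"
    using termq by simp
  also have "\<dots> = (\<Sum>a<N. g a * (\<Sum>q<N+1. ee (N+1) (h a * int q)))"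
    by (subst sum.swap) (simp only: sum_distrib_left)
  also have "\<dots> = (\<Sum>a<N. g a * (if int (N+1) dvd h a then of_nat (N+1) else 0))"
    using geo_sum[of "N+1"] by (simp del: of_nat_Suc lessThan_Suc sum.lessThan_Suc)
  also have "\<dots> = of_nat (N+1) * (\<Sum>a<N. if p a = s ((a+\<tau>) mod N)
                            then ee (N+1) (- (int (s ((a+\<tau>) mod N)) * int \<tau>)) else 0)"
    unfolding sum_distrib_left
  proof (rule sum.cong[OF refl])
    fix a assume "a \<in> {..<N}"
    then have "a < N" by simp
    have "(int (N+1) dvd h a) \<longleftrightarrow> p a = s ((a+\<tau>) mod N)"
    proof
      assume "int (N+1) dvd h a"
      moreover have "\<bar>h a\<bar> < int (N+1)"
      proof -
        have "p a < N" "s ((a+\<tau>) mod N) < N" using p s \<open>a < N\<close> N by auto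
        then show ?thesis unfolding h_def by linarith
      qed
      ultimately have "h a = 0" using small_dvd_int by blast
      then show "p a = s ((a+\<tau>) mod N)" unfolding h_def by simp
    qed (simp add: h_def)
    then show "g a * (if int (N+1) dvd h a then of_nat (N+1) else 0) =
      of_nat (N+1) * (if p a = s ((a+\<tau>) mod N)
                            then ee (N+1) (- (int (s ((a+\<tau>) mod N)) * int \<tau>)) else 0)"
      by (simp add: g_def)
  qed
  finally show ?thesis .
qed


lemma dft_formula:
  fixes p :: "nat \<Rightarrow> nat" and N k :: nat
  assumes N: "N > 0"
  shows "(\<Sum>t<N*(N+1). omega (N+1) ^ (p (t mod N) * t) * inverse (omega (N*(N+1))) ^ (t * k))
       = of_nat (N+1) * (\<Sum>a<N. if int (N+1) dvd int (p a) + int k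
                            then ee (N*(N+1)) (int a * (int N * int (p a) - int k)) else 0)"
    (is "(\<Sum>t<_. ?f t) = _")
proof -
  define g where "g a = ee (N*(N+1)) (int a * (int N * int (p a) - int k))" for a
  define h where "h a = int N * int (p a) - int k" for a
  have termq: "?f (a + N*q) = g a * ee (N+1) (h a * int q)" if a: "a < N" for a q
  proof -
    define t where "t = a + N*q"
    have tmod: "t mod N = a" using a by (simp add: t_def)
    have "?f t = ee (N+1) (int (p a * t)) * ee (N*(N+1)) (- int (t * k))"
      using tmod by (simp add: omega_pow inv_omega_pow)
    also have "ee (N+1) (int (p a * t)) = ee (N*(N+1)) (int N * int (p a * t))"
      using ee_scale[OF N, of "N+1" "int (p a * t)"] by simp
    also have "ee (N*(N+1)) (int N * int (p a * t)) * ee (N*(N+1)) (- int (t * k))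
        = ee (N*(N+1)) (int a * h a + int N * (int q * h a))"
      unfolding ee_add[symmetric] h_def t_def by (simp add: algebra_simps)
    also have "\<dots> = g a * ee (N*(N+1)) (int N * (int q * h a))"
      by (simp add: ee_add g_def h_def)
    also have "ee (N*(N+1)) (int N * (int q * h a)) = ee (N+1) (h a * int q)"
      using ee_scale[OF N, of "N+1" "int q * h a"] by (simp add: mult.commute)
    finally show ?thesis by (simp add: t_def)
  qed
  have "(\<Sum>t<N*(N+1). ?f t) = (\<Sum>q<N+1. \<Sum>a<N. ?f (a + N*q))"
    by (rule sum_decomp)
  also have "\<dots> = (\<Sum>q<N+1. \<Sum>a<N. g a * ee (N+1) (h a * int q))"
    using termq by simp
  also have "\<dots> = (\<Sum>a<N. g a * (\<Sum>q<N+1. ee (N+1) (h a * int q)))"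
    by (subst sum.swap) (simp only: sum_distrib_left)
  also have "\<dots> = (\<Sum>a<N. g a * (if int (N+1) dvd h a then of_nat (N+1) else 0))"
    using geo_sum[of "N+1"] by (simp del: of_nat_Suc lessThan_Suc sum.lessThan_Suc)
  also have "\<dots> = of_nat (N+1) * (\<Sum>a<N. if int (N+1) dvd int (p a) + int k
                            then ee (N*(N+1)) (int a * (int N * int (p a) - int k)) else 0)"
    unfolding sum_distrib_left
  proof (rule sum.cong[OF refl])
    fix a
    have "h a = int (N+1) * int (p a) + (- (int (p a) + int k))" unfolding h_def by (simp add: algebra_simps)
    then have "(int (N+1) dvd h a) \<longleftrightarrow> int (N+1) dvd - (int (p a) + int k)"
      using dvd_add_right_iff[of "int (N+1)" "int (N+1) * int (p a)"] by simp
    then have "(int (N+1) dvd h a) \<longleftrightarrow> int (N+1) dvd int (p a) + int k"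
      by (simp only: dvd_minus_iff)
    then show "g a * (if int (N+1) dvd h a then of_nat (N+1) else 0) =
      of_nat (N+1) * (if int (N+1) dvd int (p a) + int k
                            then ee (N*(N+1)) (int a * (int N * int (p a) - int k)) else 0)"
      by (simp add: g_def)
  qed
  finally show ?thesis .
qed



lemma cfr_bound:
  assumes "N \<ge> 2" "is_CFR N M \<pi>" shows "M \<le> N"
proof -
  have bij: "\<forall>i<M. bij_betw (\<pi> i) {..<N} {..<N}" and
    pr: "\<forall>m\<in>{1..<N}. \<forall>i<M. \<forall>j<M. \<forall>x<N. \<forall>y<N.
        ((\<pi> i x, \<pi> i ((x + m) mod N)) = (\<pi> j y, \<pi> j ((y + m) mod N)))
          \<longleftrightarrow> (i = j \<and> x = y)" using assms(2) unfolding is_CFR_def by auto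
  define f where "f = (\<lambda>(i,x). (\<pi> i x, \<pi> i ((x + 1) mod N)))"
  have "1 \<in> {1..<N}" using assms(1) by auto
  have inj: "inj_on f ({..<M} \<times> {..<N})"
  proof (rule inj_onI)
    fix u v assume u: "u \<in> {..<M} \<times> {..<N}" and v: "v \<in> {..<M} \<times> {..<N}" and e: "f u = f v"
    obtain i x where ix: "u = (i,x)" "i < M" "x < N" using u by auto
    obtain j y where jy: "v = (j,y)" "j < M" "y < N" using v by auto
    have "(\<pi> i x, \<pi> i ((x + 1) mod N)) = (\<pi> j y, \<pi> j ((y + 1) mod N))"
      using e ix jy unfolding f_def by simp
    then have "i = j \<and> x = y" using pr \<open>1 \<in> {1..<N}\<close> ix jy by blast
    then show "u = v" using ix jy by simp
  qed
  have img: "f ` ({..<M} \<times> {..<N}) \<subseteq> {..<N} \<times> {..<N}"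
  proof
    fix z assume "z \<in> f ` ({..<M} \<times> {..<N})"
    then obtain i x where ix: "i < M" "x < N" "z = f (i,x)" by auto
    have "(x+1) mod N < N" using assms(1) by simp
    then show "z \<in> {..<N} \<times> {..<N}"
      using bij ix bij_betwE unfolding f_def by fastforce
  qed
  have "card ({..<M} \<times> {..<N}) \<le> card ({..<N} \<times> {..<N})"
    by (rule card_inj_on_le[OF inj img]) simp
  then have "M * N \<le> N * N" by (simp add: card_cartesian_product)
  then show ?thesis using assms(1) by simp
qed

lemma t42: fixes N x y :: nat assumes "2*x mod N = 2*y mod N" shows "int N dvd int (2*x) - int (2*y)"
proof -
  have "int (2*x mod N) = int (2*y mod N)" using assms by simp
  then have "int (2*x) mod int N = int (2*y) mod int N" by (simp only: of_nat_mod)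
  then show ?thesis by (simp only: mod_eq_dvd_iff)
qed

lemma t45: fixes N :: nat and z :: int assumes "odd N" "int N dvd 2 * z" shows "int N dvd z"
proof -
  obtain r where r: "N = 2*r+1" using assms(1) oddE by blast
  have "int N dvd int (r+1) * (2*z)" using assms(2) by simp
  moreover have "int (r+1) * (2*z) = int N * z + z" using r by (simp add: algebra_simps)
  ultimately have "int N dvd int N * z + z" by simp
  then show ?thesis by (simp add: dvd_add_right_iff)
qed

lemma t64: fixes N y m :: nat shows "2*((y+m) mod N) mod N = (2*y + m + m) mod N"
proof -
  have "2*((y+m) mod N) mod N = (2*(y+m)) mod N" by (simp add: mod_mult_right_eq)
  also have "2*(y+m) = 2*y+m+m" by simp
  finally show ?thesis .
qed

lemma t66: fixes N a b :: nat assumes "(a+b) mod N = a mod N" shows "N dvd b"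
proof -
  have "N dvd (a+b) - a" using assms mod_eq_dvd_iff_nat[of a "a+b" N] by simp
  then show ?thesis by simp
qed

lemma double_inj:
  fixes N x y :: nat
  assumes "odd N" "x < N" "y < N" "2*x mod N = 2*y mod N" shows "x = y"
proof -
  have "int N dvd 2 * (int x - int y)" using t42[OF assms(4)] by (simp add: algebra_simps)
  then have "int N dvd int x - int y" using t45[OF assms(1)] by blast
  moreover have "\<bar>int x - int y\<bar> < int N" using assms by linarith
  ultimately have "int x - int y = 0" using small_dvd_int by blast
  then show ?thesis by simp
qed

lemma cfr_two:
  assumes "odd N" "N \<ge> 3"
  shows "is_CFR N 2 (\<lambda>i x. if i = 0 then x else 2*x mod N)"
proof -
  have inj2: "inj_on (\<lambda>x. 2*x mod N) {..<N}"
  proof (rule inj_onI)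
    fix x y assume "x \<in> {..<N}" "y \<in> {..<N}" "2*x mod N = 2*y mod N"
    then show "x = y" using double_inj[OF assms(1), of x y] by simp
  qed
  have sub: "(\<lambda>x. 2*x mod N) ` {..<N} \<subseteq> {..<N}" using assms by auto
  have "(\<lambda>x. 2*x mod N) ` {..<N} = {..<N}"
    by (rule endo_inj_surj[OF finite_lessThan sub inj2])
  then have bij2: "bij_betw (\<lambda>x. 2*x mod N) {..<N} {..<N}"
    using inj2 unfolding bij_betw_def by simp
  have cross: False if m: "m \<in> {1..<N}" and x: "x < N" and y: "y < N"
       and e1: "x = 2*y mod N" and e2: "(x+m) mod N = 2*((y+m) mod N) mod N" for m x y
  proof -
    have "(x+m) mod N = (2*y + m) mod N" using e1 by (simp add: mod_add_left_eq)
    moreover have "2*((y+m) mod N) mod N = (2*y + m + m) mod N" by (rule t64)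
    ultimately have "(2*y+m+m) mod N = (2*y+m) mod N" using e2 by simp
    then have "N dvd m" using t66[of "2*y+m" m N] by simp
    then show False using m by (auto dest: dvd_imp_le)
  qed
  show ?thesis unfolding is_CFR_def
  proof (intro conjI allI impI ballI)
    fix i assume "i < (2::nat)"
    show "bij_betw (\<lambda>x. if i = 0 then x else 2*x mod N) {..<N} {..<N}"
    proof (cases "i = 0")
      case True
      then show ?thesis using bij_betw_id[of "{..<N}"] by (simp add: id_def)
    next
      case False
      then show ?thesis using bij2 by simp
    qed
  next
    fix m i j x y assume m: "m \<in> {1..<N}" and i: "i < (2::nat)" and j: "j < (2::nat)"
      and x: "x < N" and y: "y < N"
    show "((if i = 0 then x else 2*x mod N, if i = 0 then (x + m) mod N else 2*((x + m) mod N) mod N) =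
           (if j = 0 then y else 2*y mod N, if j = 0 then (y + m) mod N else 2*((y + m) mod N) mod N))
          \<longleftrightarrow> (i = j \<and> x = y)"
    proof (cases "i = 0"; cases "j = 0")
      assume "i = 0" "j = 0" then show ?thesis by auto
    next
      assume "i = 0" "j \<noteq> 0" then show ?thesis using cross[OF m x y] by auto
    next
      assume "i \<noteq> 0" "j = 0" then show ?thesis using cross[OF m y x] by auto
    next
      assume "i \<noteq> 0" "j \<noteq> 0"
      then have "i = j" using i j by auto
      then show ?thesis using double_inj[OF assms(1) x y] \<open>i \<noteq> 0\<close> by auto
    qed
  qed
qed

lemma K_ge_2:
  assumes "odd N" "N \<ge> 3" shows "F_tilde N \<ge> 2"
  unfolding F_tilde_def
  by (rule Greatest_le_nat[where b = N]) (use cfr_two[OF assms] cfr_bound assms in auto)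

lemma K_cfr:
  assumes "odd N" "N \<ge> 3" shows "\<exists>\<pi>. is_CFR N (F_tilde N) \<pi>"
  unfolding F_tilde_def
  by (rule GreatestI_nat[where b = N]) (use cfr_two[OF assms] cfr_bound assms in auto)



lemma sum_single:
  fixes f :: "nat \<Rightarrow> complex"
  assumes uniq: "\<And>a b. a < N \<Longrightarrow> b < N \<Longrightarrow> P a \<Longrightarrow> P b \<Longrightarrow> a = b"
    and a0: "a0 < N" "P a0"
  shows "(\<Sum>a<N. if P a then f a else 0) = f a0"
proof -
  have "(\<Sum>a<N. if P a then f a else 0) = (\<Sum>a<N. if a = a0 then f a0 else 0)"
  proof (rule sum.cong[OF refl])
    fix a assume "a \<in> {..<N}"
    then have "a < N" by simp
    show "(if P a then f a else 0) = (if a = a0 then f a0 else 0)"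
    proof (cases "a = a0")
      case True then show ?thesis using a0 by simp
    next
      case False
      then have "\<not> P a" using uniq[OF \<open>a < N\<close> a0(1) _ a0(2)] by blast
      then show ?thesis using False by simp
    qed
  qed
  also have "\<dots> = f a0" using a0 by (simp add: sum.delta)
  finally show ?thesis .
qed

lemma sum_none:
  fixes f :: "nat \<Rightarrow> complex"
  assumes "\<And>a. a < N \<Longrightarrow> \<not> P a"
  shows "(\<Sum>a<N. if P a then f a else 0) = 0"
  using assms by (intro sum.neutral) auto

lemma coprime_not_dvd:
  fixes N \<tau> :: nat
  assumes "N dvd \<tau>" "0 < \<tau>" "\<tau> < N*(N+1)"
  shows "\<not> int (N+1) dvd - int \<tau>"
proof
  assume "int (N+1) dvd - int \<tau>"
  then have "int (N+1) dvd int \<tau>" by (simp only: dvd_minus_iff)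
  then have "(N+1) dvd \<tau>" by (simp only: int_dvd_int_iff)
  then have "N * (N+1) dvd \<tau>" using assms(1) by (intro divides_mult) simp_all
  then show False using assms(2,3) by (auto dest: dvd_imp_le)
qed

lemma auto_val:
  fixes p :: "nat \<Rightarrow> nat" and N \<tau> :: nat
  assumes N: "N > 0" and bij: "bij_betw p {..<N} {..<N}" and tau: "0 < \<tau>" "\<tau> < N*(N+1)"
  shows "cmod (of_nat (N+1) * (\<Sum>a<N. if p a = p ((a+\<tau>) mod N)
            then ee (N+1) (- (int (p ((a+\<tau>) mod N)) * int \<tau>)) else 0))
         = (if N dvd \<tau> then real (N+1) else 0)"
proof (cases "N dvd \<tau>")
  case False
  have "\<not> (p a = p ((a+\<tau>) mod N))" if "a < N" for a
  proof
    assume "p a = p ((a+\<tau>) mod N)"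
    moreover have "(a+\<tau>) mod N < N" using N by simp
    ultimately have "a = (a+\<tau>) mod N" using bij that unfolding bij_betw_def inj_on_def by auto
    then have "(a+\<tau>) mod N = a mod N" using that by simp
    then show False using t66 False by blast
  qed
  then show ?thesis using False by (simp add: sum_none)
next
  case True
  have am: "(a+\<tau>) mod N = a" if "a < N" for a
    using True that by (metis mod_add_self2 mod_less dvd_def mult.commute mod_mult_self2)
  have "(\<Sum>a<N. if p a = p ((a+\<tau>) mod N)
            then ee (N+1) (- (int (p ((a+\<tau>) mod N)) * int \<tau>)) else 0)
      = (\<Sum>a<N. ee (N+1) (- int \<tau> * int (p a)))"
    by (rule sum.cong[OF refl]) (simp add: am mult.commute)
  also have "\<dots> = (\<Sum>v<N. ee (N+1) (- int \<tau> * int v))"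
    by (rule sum.reindex_bij_betw[OF bij])
  also have "\<dots> = (\<Sum>v<N+1. ee (N+1) (- int \<tau> * int v)) - ee (N+1) (- int \<tau> * int N)"
    by simp
  also have "(\<Sum>v<N+1. ee (N+1) (- int \<tau> * int v)) = 0"
    using geo_sum[of "N+1" "- int \<tau>"] coprime_not_dvd[OF True tau] by simp
  finally have "cmod (\<Sum>a<N. if p a = p ((a+\<tau>) mod N)
            then ee (N+1) (- (int (p ((a+\<tau>) mod N)) * int \<tau>)) else 0) = 1"
    by (simp add: norm_ee)
  then show ?thesis using True by (simp only: norm_mult norm_of_nat) simp
qed



lemma cross_uniq_lt:
  assumes cfr: "is_CFR N K \<pi>" and mm: "m < K" "m' < K" "m \<noteq> m'"
    and ab: "a < b" "b < N"
    and ea: "\<pi> m a = \<pi> m' ((a+\<tau>) mod N)" and eb: "\<pi> m b = \<pi> m' ((b+\<tau>) mod N)"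
  shows False
proof -
  have pr: "\<forall>d\<in>{1..<N}. \<forall>i<K. \<forall>j<K. \<forall>x<N. \<forall>y<N.
        ((\<pi> i x, \<pi> i ((x + d) mod N)) = (\<pi> j y, \<pi> j ((y + d) mod N)))
          \<longleftrightarrow> (i = j \<and> x = y)" using cfr unfolding is_CFR_def by blast
  define d where "d = b - a"
  have d: "d \<in> {1..<N}" using ab unfolding d_def by auto
  have ad: "(a + d) mod N = b" using ab unfolding d_def by simp
  have yd: "((a+\<tau>) mod N + d) mod N = (b+\<tau>) mod N"
  proof -
    have "((a+\<tau>) mod N + d) mod N = (a+\<tau>+d) mod N" by (simp add: mod_add_left_eq)
    also have "a+\<tau>+d = b+\<tau>" using ab unfolding d_def by simp
    finally show ?thesis .
  qed
  have "(\<pi> m a, \<pi> m ((a + d) mod N)) = (\<pi> m' ((a+\<tau>) mod N), \<pi> m' (((a+\<tau>) mod N + d) mod N))"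
    using ad yd ea eb by simp
  moreover have "(a+\<tau>) mod N < N" using ab by simp
  ultimately have "m = m'" using pr d mm ab by (meson order.strict_trans)
  then show False using mm by simp
qed

lemma cross_uniq:
  assumes cfr: "is_CFR N K \<pi>" and mm: "m < K" "m' < K" "m \<noteq> m'"
    and ab: "a < N" "b < N"
    and ea: "\<pi> m a = \<pi> m' ((a+\<tau>) mod N)" and eb: "\<pi> m b = \<pi> m' ((b+\<tau>) mod N)"
  shows "a = b"
proof (rule linorder_cases[of a b])
  assume "a < b" then show ?thesis using cross_uniq_lt[OF cfr mm _ ab(2) ea eb] by blast
next
  assume "b < a" then show ?thesis using cross_uniq_lt[OF cfr mm _ ab(1) eb ea] by blast
qed

lemma cross_val:
  fixes f :: "nat \<Rightarrow> int"
  assumes cfr: "is_CFR N K \<pi>" and mm: "m < K" "m' < K" "m \<noteq> m'"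
  shows "cmod (of_nat (N+1) * (\<Sum>a<N. if \<pi> m a = \<pi> m' ((a+\<tau>) mod N)
            then ee (N+1) (f a) else 0))
         = (if \<exists>a<N. \<pi> m a = \<pi> m' ((a+\<tau>) mod N) then real (N+1) else 0)"
proof (cases "\<exists>a<N. \<pi> m a = \<pi> m' ((a+\<tau>) mod N)")
  case True
  then obtain a0 where a0: "a0 < N" "\<pi> m a0 = \<pi> m' ((a0+\<tau>) mod N)" by blast
  have "(\<Sum>a<N. if \<pi> m a = \<pi> m' ((a+\<tau>) mod N) then ee (N+1) (f a) else 0) = ee (N+1) (f a0)"
    by (rule sum_single[where P = "\<lambda>a. \<pi> m a = \<pi> m' ((a+\<tau>) mod N)", OF _ a0]) (rule cross_uniq[OF cfr mm], auto)
  then show ?thesis using True by (simp only: norm_mult norm_of_nat norm_ee) simp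
next
  case False
  then show ?thesis by (subst sum_none) auto
qed

lemma sqrt_lemma: assumes "N > 0"
  shows "real (N+1) / sqrt (real (N*(N+1))) = sqrt (real (N+1) / real N)"
proof -
  have "real (N+1) = sqrt ((real (N+1))^2)" by simp
  then have "real (N+1) / sqrt (real (N*(N+1))) = sqrt ((real (N+1))^2 / real (N*(N+1)))"
    by (metis real_sqrt_divide)
  also have "(real (N+1))^2 / real (N*(N+1)) = real (N+1) / real N"
  proof -
    have gen: "x \<noteq> 0 \<Longrightarrow> x^2 / (n * x) = x / n" for x n :: real
      by (simp add: power2_eq_square)
    have "real (N*(N+1)) = real N * real (N+1)" by (simp only: of_nat_mult)
    then show ?thesis using gen[of "real (N+1)" "real N"] by simp
  qed
  finally show ?thesis .
qed

lemma dft_val: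
  fixes p :: "nat \<Rightarrow> nat" and N j :: nat
  assumes N: "N > 0" and bij: "bij_betw p {..<N} {..<N}" and j: "j < N*(N+1)"
  shows "(j \<in> {1 + a * (N + 1) | a. a < N} \<longrightarrow>
            dft (N*(N+1)) (\<lambda>t. omega (N+1) ^ (p (t mod N) * t)) j = 0) \<and>
         (j \<notin> {1 + a * (N + 1) | a. a < N} \<longrightarrow>
            cmod (dft (N*(N+1)) (\<lambda>t. omega (N+1) ^ (p (t mod N) * t)) j) = sqrt (real (N + 1) / real N))"
proof -
  have pN: "p a < N" if "a < N" for a using bij that bij_betwE by blast
  define S where "S = (\<Sum>a<N. if int (N+1) dvd int (p a) + int j
                            then ee (N*(N+1)) (int a * (int N * int (p a) - int j)) else 0)"
  have D: "dft (N*(N+1)) (\<lambda>t. omega (N+1) ^ (p (t mod N) * t)) j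
      = (1 / of_real (sqrt (real (N*(N+1))))) * (of_nat (N+1) * S)"
    unfolding dft_def S_def using dft_formula[OF N, of p j] by simp
  show ?thesis
  proof (intro conjI impI)
    assume "j \<in> {1 + a * (N + 1) | a. a < N}"
    then obtain c where c: "j = 1 + c * (N+1)" by blast
    have "\<not> int (N+1) dvd int (p a) + int j" if "a < N" for a
    proof
      assume "int (N+1) dvd int (p a) + int j"
      moreover have "int (p a) + int j = (int (p a) + 1) + int (N+1) * int c" using c by (simp add: algebra_simps)
      ultimately have "int (N+1) dvd int (p a) + 1"
        by (metis dvd_add_right_iff dvd_triv_left add.commute)
      then have "int (N+1) \<le> int (p a) + 1" by (rule zdvd_imp_le) simp
      then show False using pN[OF that] by simp
    qed
    then have "S = 0" unfolding S_def by (rule sum_none)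
    then show "dft (N*(N+1)) (\<lambda>t. omega (N+1) ^ (p (t mod N) * t)) j = 0" using D by simp
  next
    assume nO: "j \<notin> {1 + a * (N + 1) | a. a < N}"
    define r where "r = j mod (N+1)"
    define q where "q = j div (N+1)"
    have jqr: "j = q * (N+1) + r" unfolding q_def r_def by (rule div_mult_mod_eq[symmetric])
    have r1: "r \<noteq> 1"
    proof
      assume "r = 1"
      have "q < N" unfolding q_def using j by (intro less_mult_imp_div_less) (simp add: mult.commute)
      then show False using nO jqr \<open>r = 1\<close> by auto
    qed
    have rle: "r \<le> N" unfolding r_def by (metis Suc_eq_plus1 less_Suc_eq_le mod_less_divisor zero_less_Suc)
    define v where "v = (if r = 0 then 0 else N + 1 - r)"
    have vN: "v < N" using r1 rle N unfolding v_def by auto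
    have vdvd: "int (N+1) dvd int v + int j"
    proof (cases "r = 0")
      case True
      then have "int v + int j = int (N+1) * int q" using jqr unfolding v_def by (simp add: algebra_simps)
      then show ?thesis by simp
    next
      case False
      then have "int v + int j = int (N+1) * (int q + 1)" using jqr rle unfolding v_def
        by (simp add: algebra_simps of_nat_diff)
      then show ?thesis by simp
    qed
    obtain a0 where a0: "a0 < N" "p a0 = v"
      using bij vN unfolding bij_betw_def by (metis imageE lessThan_iff)
    have iff: "int (N+1) dvd int (p a) + int j \<longleftrightarrow> p a = v" if "a < N" for a
    proof
      assume h: "int (N+1) dvd int (p a) + int j"
      have "int (N+1) dvd (int (p a) + int j) - (int v + int j)" using h vdvd by (rule dvd_diff)
      then have "int (N+1) dvd int (p a) - int v" by simp
      moreover have "\<bar>int (p a) - int v\<bar> < int (N+1)" using pN[OF that] vN by linarith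
      ultimately have "int (p a) - int v = 0" using small_dvd_int by blast
      then show "p a = v" by simp
    qed (use vdvd in simp)
    have "S = (\<Sum>a<N. if p a = v then ee (N*(N+1)) (int a * (int N * int (p a) - int j)) else 0)"
      unfolding S_def
    proof (rule sum.cong[OF refl])
      fix a assume "a \<in> {..<N}"
      then have "a < N" by simp
      show "(if int (N+1) dvd int (p a) + int j
                            then ee (N*(N+1)) (int a * (int N * int (p a) - int j)) else 0) =
            (if p a = v then ee (N*(N+1)) (int a * (int N * int (p a) - int j)) else 0)"
        by (simp only: iff[OF \<open>a < N\<close>])
    qed
    also have "\<dots> = ee (N*(N+1)) (int a0 * (int N * int (p a0) - int j))"
    proof (rule sum_single[OF _ a0(1)])
      fix a b assume "a < N" "b < N" "p a = v" "p b = v"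
      then show "a = b" using bij unfolding bij_betw_def inj_on_def by auto
    qed (rule a0(2))
    finally have "cmod S = 1" by (simp add: norm_ee)
    then have "cmod (dft (N*(N+1)) (\<lambda>t. omega (N+1) ^ (p (t mod N) * t)) j)
        = real (N+1) / sqrt (real (N*(N+1)))"
      unfolding D by (simp only: norm_mult norm_of_nat norm_divide norm_one norm_of_real) simp
    then show "cmod (dft (N*(N+1)) (\<lambda>t. omega (N+1) ^ (p (t mod N) * t)) j) = sqrt (real (N + 1) / real N)"
      using sqrt_lemma[OF N] by simp
  qed
qed



theorem theorem3:
  fixes N K :: nat and \<pi> :: "nat \<Rightarrow> nat \<Rightarrow> nat"
  assumes "odd N" and "N \<ge> 3" and "K = F_tilde N" and "is_CFR N K \<pi>"
  shows "(let L = N * (N + 1);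
              C = cfr_seq N \<pi>;
              \<theta>a = Max {cmod (pcorr L (C m) (C m) \<tau>) | m \<tau>. m < K \<and> 0 < \<tau> \<and> \<tau> < L};
              \<theta>c = Max {cmod (pcorr L (C m) (C m') \<tau>) | m m' \<tau>. m < K \<and> m' < K \<and> m \<noteq> m' \<and> \<tau> < L};
              \<Omega> = {1 + a * (N + 1) | a. a < N}
          in \<theta>a = real (N + 1) \<and> \<theta>c = real (N + 1) \<and> max \<theta>a \<theta>c = real (N + 1) \<and>
             (\<forall>m<K. \<forall>j<L.
                (j \<in> \<Omega> \<longrightarrow> dft L (C m) j = 0) \<and>
                (j \<notin> \<Omega> \<longrightarrow> cmod (dft L (C m) j) = sqrt (real (N + 1) / real N))))"
proof -
  have N0: "N > 0" using assms(2) by simp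
  have K2: "K \<ge> 2" using K_ge_2[OF assms(1,2)] assms(3) by simp
  have cfr: "is_CFR N K \<pi>" by (rule assms(4))
  have bij: "bij_betw (\<pi> i) {..<N} {..<N}" if "i < K" for i
    using cfr that unfolding is_CFR_def by blast
  have rng: "\<pi> i a < N" if "i < K" "a < N" for i a
    using bij[OF that(1)] that(2) bij_betwE by blast
  have Ceq: "cfr_seq N \<pi> m = (\<lambda>t. omega (N+1) ^ (\<pi> m (t mod N) * t))" for m
    by (rule ext) (simp add: cfr_seq_def)
  have pc: "pcorr (N*(N+1)) (cfr_seq N \<pi> m) (cfr_seq N \<pi> m') \<tau> =
      of_nat (N+1) * (\<Sum>a<N. if \<pi> m a = \<pi> m' ((a+\<tau>) mod N)
                            then ee (N+1) (- (int (\<pi> m' ((a+\<tau>) mod N)) * int \<tau>)) else 0)"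
    if "m < K" "m' < K" for m m' \<tau>
    unfolding pcorr_def Ceq
    using corr_formula[OF N0, of "\<pi> m" "\<pi> m'" \<tau>] rng that by simp
  define A where "A = {cmod (pcorr (N*(N+1)) (cfr_seq N \<pi> m) (cfr_seq N \<pi> m) \<tau>) | m \<tau>. m < K \<and> 0 < \<tau> \<and> \<tau> < N*(N+1)}"
  define B where "B = {cmod (pcorr (N*(N+1)) (cfr_seq N \<pi> m) (cfr_seq N \<pi> m') \<tau>) | m m' \<tau>. m < K \<and> m' < K \<and> m \<noteq> m' \<and> \<tau> < N*(N+1)}"
  have MA: "Max A = real (N+1)"
  proof (rule Max_eqI)
    have "A \<subseteq> (\<lambda>(m,\<tau>). cmod (pcorr (N*(N+1)) (cfr_seq N \<pi> m) (cfr_seq N \<pi> m) \<tau>)) ` ({..<K} \<times> {..<N*(N+1)})"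
      unfolding A_def by auto
    then show "finite A" by (rule finite_subset) simp
  next
    fix y assume "y \<in> A"
    then obtain m \<tau> where mt: "m < K" "0 < \<tau>" "\<tau> < N*(N+1)"
      and y: "y = cmod (pcorr (N*(N+1)) (cfr_seq N \<pi> m) (cfr_seq N \<pi> m) \<tau>)"
      unfolding A_def by blast
    have "y = (if N dvd \<tau> then real (N+1) else 0)"
      unfolding y pc[OF mt(1) mt(1)] by (rule auto_val[OF N0 bij[OF mt(1)] mt(2,3)])
    then show "y \<le> real (N+1)" by simp
  next
    have "0 < K" "0 < N" "N < N*(N+1)" using K2 assms(2) by auto
    moreover have "cmod (pcorr (N*(N+1)) (cfr_seq N \<pi> 0) (cfr_seq N \<pi> 0) N) = real (N+1)"
      unfolding pc[OF \<open>0 < K\<close> \<open>0 < K\<close>]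
      using auto_val[OF N0 bij[OF \<open>0 < K\<close>] \<open>0 < N\<close> \<open>N < N*(N+1)\<close>] by simp
    ultimately show "real (N+1) \<in> A" unfolding A_def mem_Collect_eq
      by (intro exI[of _ 0] exI[of _ N]) simp
  qed
  have MB: "Max B = real (N+1)"
  proof (rule Max_eqI)
    have "B \<subseteq> (\<lambda>(m,m',\<tau>). cmod (pcorr (N*(N+1)) (cfr_seq N \<pi> m) (cfr_seq N \<pi> m') \<tau>)) ` ({..<K} \<times> {..<K} \<times> {..<N*(N+1)})"
      unfolding B_def
    proof (intro subsetI)
      fix z assume "z \<in> {cmod (pcorr (N*(N+1)) (cfr_seq N \<pi> m) (cfr_seq N \<pi> m') \<tau>) | m m' \<tau>. m < K \<and> m' < K \<and> m \<noteq> m' \<and> \<tau> < N*(N+1)}"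
      then obtain m m' \<tau> where "z = cmod (pcorr (N*(N+1)) (cfr_seq N \<pi> m) (cfr_seq N \<pi> m') \<tau>)"
        "m < K" "m' < K" "\<tau> < N*(N+1)" by blast
      then show "z \<in> (\<lambda>(m,m',\<tau>). cmod (pcorr (N*(N+1)) (cfr_seq N \<pi> m) (cfr_seq N \<pi> m') \<tau>)) ` ({..<K} \<times> {..<K} \<times> {..<N*(N+1)})"
        by (intro image_eqI[of _ _ "(m,m',\<tau>)"]) auto
    qed
    then show "finite B" by (rule finite_subset) simp
  next
    fix y assume "y \<in> B"
    then obtain m m' \<tau> where mt: "m < K" "m' < K" "m \<noteq> m'"
      and y: "y = cmod (pcorr (N*(N+1)) (cfr_seq N \<pi> m) (cfr_seq N \<pi> m') \<tau>)"
      unfolding B_def by blast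
    have "y = (if \<exists>a<N. \<pi> m a = \<pi> m' ((a+\<tau>) mod N) then real (N+1) else 0)"
      unfolding y pc[OF mt(1,2)] by (rule cross_val[OF cfr mt])
    then show "y \<le> real (N+1)" by simp
  next
    have K01: "0 < K" "1 < K" "(0::nat) \<noteq> 1" using K2 by auto
    have "\<pi> 0 0 < N" using rng[OF K01(1) N0] .
    then have "\<pi> 0 0 \<in> \<pi> 1 ` {..<N}" using bij[OF K01(2)] unfolding bij_betw_def by simp
    then obtain y where y0: "y \<in> {..<N}" "\<pi> 0 0 = \<pi> 1 y" by (rule imageE)
    then have y: "y < N" "\<pi> 1 y = \<pi> 0 0" by simp_all
    have "N \<le> N*(N+1)" by simp
    then have yL: "y < N*(N+1)" using y(1) by linarith
    have "\<exists>a<N. \<pi> 0 a = \<pi> 1 ((a+y) mod N)" using y N0 by (intro exI[of _ 0]) simp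
    then have "cmod (pcorr (N*(N+1)) (cfr_seq N \<pi> 0) (cfr_seq N \<pi> 1) y) = real (N+1)"
      unfolding pc[OF K01(1,2)] using cross_val[OF cfr K01] by simp
    then show "real (N+1) \<in> B" unfolding B_def mem_Collect_eq using K01 yL
      by (intro exI[of _ 0] exI[of _ 1] exI[of _ y]) simp
  qed
  have D: "\<forall>m<K. \<forall>j<N*(N+1).
                (j \<in> {1 + a * (N + 1) | a. a < N} \<longrightarrow> dft (N*(N+1)) (cfr_seq N \<pi> m) j = 0) \<and>
                (j \<notin> {1 + a * (N + 1) | a. a < N} \<longrightarrow> cmod (dft (N*(N+1)) (cfr_seq N \<pi> m) j) = sqrt (real (N + 1) / real N))"
    unfolding Ceq using dft_val[OF N0 bij] by blast
  show ?thesis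
    unfolding Let_def A_def[symmetric] B_def[symmetric] MA MB max_def
    apply (intro conjI)
       apply (rule refl)
      apply (rule refl)
     apply simp
    apply (rule D)
    done
qed

end
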